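(* Let $(\mathcal E,d)$ be a compact metric space, $k>1$, and $f_1,\dots,f_k$ homeomorphisms of $\mathcal E$ such that there are compact subsets $A_1,B_1,\dots,A_k,B_k$ of $\mathcal E$, pairwise disjoint, with $f_i(\mathcal E\setminus A_i)\subset B_i$ for each $i$, and such that the restrictions of $f_i$ to $\mathcal E\setminus A_i$ and of $f_i^{-1}$ to $\mathcal E\setminus B_i$ are contractions for $d$. For $g\in\{f_i,f_i^{-1}\}$ set $C(g)=B_i$, $C'(g)=A_i$ if $g=f_i$, and $C(g)=A_i$, $C'(g)=B_i$ if $g=f_i^{-1}$. Then for every $\varepsilon>0$ there is $\ell\in\mathbb N$ such that for every reduced word $g_\ell\circ\cdots\circ g_1$ with letters $g_j\in\{f_i,f_i^{-1}:1\le i\le k\}$ one has $\mathrm{diam}\big(g_\ell\circ\cdots\circ g_1(\mathcal E\setminus C'(g_1))\big)<\varepsilon$.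
   Context: A word $g_\ell\circ\cdots\circ g_1$ is reduced if no letter is immediately followed by its inverse ($g_{j+1}\neq g_j^{-1}$). A map is a contraction for $d$ on a set if it does not increase and strictly decreases distances there: $d(f(x),f(y))<d(x,y)$ for distinct $x,y$ in that set. *)

theory Defs
  imports "HOL-Analysis.Analysis"
begin

definition contraction_on :: "'a::metric_space set \<Rightarrow> ('a \<Rightarrow> 'a) \<Rightarrow> bool" where
  "contraction_on S h \<longleftrightarrow>
     (\<forall>x\<in>S. \<forall>y\<in>S. dist (h x) (h y) \<le> dist x y) \<and>
     (\<forall>x\<in>S. \<forall>y\<in>S. x \<noteq> y \<longrightarrow> dist (h x) (h y) < dist x y)"

text \<open>Letters: (i, True) stands for f_i, (i, False) for f_i^{-1}.\<close>
type_synonym letter = "nat \<times> bool"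

definition letter_map :: "(nat \<Rightarrow> 'a \<Rightarrow> 'a) \<Rightarrow> (nat \<Rightarrow> 'a \<Rightarrow> 'a) \<Rightarrow> letter \<Rightarrow> 'a \<Rightarrow> 'a" where
  "letter_map f finv l = (if snd l then f (fst l) else finv (fst l))"

definition letter_inv :: "letter \<Rightarrow> letter" where
  "letter_inv l = (fst l, \<not> snd l)"

definition Cset :: "(nat \<Rightarrow> 'a set) \<Rightarrow> (nat \<Rightarrow> 'a set) \<Rightarrow> letter \<Rightarrow> 'a set" where
  "Cset A B l = (if snd l then B (fst l) else A (fst l))"

definition C'set :: "(nat \<Rightarrow> 'a set) \<Rightarrow> (nat \<Rightarrow> 'a set) \<Rightarrow> letter \<Rightarrow> 'a set" where
  "C'set A B l = (if snd l then A (fst l) else B (fst l))"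

text \<open>The word [g_1, ..., g_l] is evaluated as g_l \<circ> ... \<circ> g_1.\<close>
fun word_map :: "(nat \<Rightarrow> 'a \<Rightarrow> 'a) \<Rightarrow> (nat \<Rightarrow> 'a \<Rightarrow> 'a) \<Rightarrow> letter list \<Rightarrow> 'a \<Rightarrow> 'a" where
  "word_map f finv [] = id"
| "word_map f finv (l # ls) = word_map f finv ls \<circ> letter_map f finv l"

definition reduced_word :: "letter list \<Rightarrow> bool" where
  "reduced_word w \<longleftrightarrow> (\<forall>j. Suc j < length w \<longrightarrow> w ! Suc j \<noteq> letter_inv (w ! j))"

end

theory Submission
  imports Defs
begin

lemma contr_delta:
  fixes g :: "'a::metric_space \<Rightarrow> 'a"
  assumes K: "compact K" and gc: "continuous_on K g"
    and st: "\<forall>x\<in>K. \<forall>y\<in>K. x\<noteq>y \<longrightarrow> dist (g x) (g y) < dist x y" and t: "t > 0"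
  shows "\<exists>\<delta>>0. \<forall>x\<in>K. \<forall>y\<in>K. t \<le> dist x y \<longrightarrow> dist (g x) (g y) \<le> dist x y - \<delta>"
proof -
  define Q where "Q = (K \<times> K) \<inter> {p. t \<le> dist (fst p) (snd p)}"
  have cl: "closed {p::'a\<times>'a. t \<le> dist (fst p) (snd p)}"
    by (intro closed_Collect_le continuous_intros)
  have cQ: "compact Q" unfolding Q_def
    by (intro compact_Int_closed compact_Times K cl)
  show ?thesis
  proof (cases "Q = {}")
    case True
    then show ?thesis by (intro exI[of _ 1]) (auto simp: Q_def)
  next
    case False
    have c1: "continuous_on Q (\<lambda>p. g (fst p))"
      by (rule continuous_on_compose2[OF gc continuous_on_fst]) (auto simp: Q_def)
    have c2: "continuous_on Q (\<lambda>p. g (snd p))"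
      by (rule continuous_on_compose2[OF gc continuous_on_snd]) (auto simp: Q_def)
    have "continuous_on Q (\<lambda>p. dist (fst p) (snd p) - dist (g (fst p)) (g (snd p)))"
      by (intro continuous_intros c1 c2)
    from continuous_attains_inf[OF cQ False this] obtain p0 where
      p0: "p0 \<in> Q" "\<forall>y\<in>Q. dist (fst p0) (snd p0) - dist (g (fst p0)) (g (snd p0))
           \<le> dist (fst y) (snd y) - dist (g (fst y)) (g (snd y))" by blast
    have "fst p0 \<noteq> snd p0" using p0(1) t by (auto simp: Q_def)
    then have pos: "dist (fst p0) (snd p0) - dist (g (fst p0)) (g (snd p0)) > 0"
      using st p0(1) by (auto simp: Q_def)
    show ?thesis
    proof (intro exI[of _ "dist (fst p0) (snd p0) - dist (g (fst p0)) (g (snd p0))"] conjI pos ballI impI)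
      fix x y assume "x \<in> K" "y \<in> K" "t \<le> dist x y"
      then have "(x,y) \<in> Q" by (auto simp: Q_def)
      from p0(2)[rule_format, OF this] show "dist (g x) (g y) \<le> dist x y - (dist (fst p0) (snd p0) - dist (g (fst p0)) (g (snd p0)))"
        by simp
    qed
  qed
qed

lemma finite_uniform:
  assumes "finite S" "\<forall>s\<in>S. \<exists>\<delta>::real>0. P s \<delta>"
    "\<And>s \<delta> \<delta>'. P s \<delta> \<Longrightarrow> 0 < \<delta>' \<Longrightarrow> \<delta>' \<le> \<delta> \<Longrightarrow> P s \<delta>'"
  shows "\<exists>\<delta>>0. \<forall>s\<in>S. P s \<delta>"
  using assms(1,2)
proof (induction S rule: finite_induct)
  case empty then show ?case by (auto intro: exI[of _ 1])
next
  case (insert x F)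
  then obtain d1 where d1: "d1 > 0" "\<forall>s\<in>F. P s d1" by auto
  from insert obtain d2 where d2: "d2 > 0" "P x d2" by auto
  show ?case
    by (rule exI[of _ "min d1 d2"]) (use d1 d2 assms(3) in \<open>auto simp: min_def\<close>)
qed

lemma reduced_Cons2: "reduced_word (h # g # ws) \<Longrightarrow> g \<noteq> letter_inv h \<and> reduced_word (g # ws)"
  unfolding reduced_word_def
  apply (intro conjI)
   apply (metis Suc_less_eq length_Cons nth_Cons_0 nth_Cons_Suc zero_less_Suc)
  by (metis Suc_less_eq length_Cons nth_Cons_Suc)

theorem lemma6p3:
  fixes E :: "'a::metric_space set"
    and k :: nat
    and f finv :: "nat \<Rightarrow> 'a \<Rightarrow> 'a"
    and A B :: "nat \<Rightarrow> 'a set"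
  assumes "compact E"
    and "k > 1"
    and homeo: "\<forall>i\<in>{1..k}. homeomorphism E E (f i) (finv i)"
    and cpt: "\<forall>i\<in>{1..k}. compact (A i) \<and> compact (B i) \<and> A i \<subseteq> E \<and> B i \<subseteq> E"
    and disjAB: "\<forall>i\<in>{1..k}. \<forall>j\<in>{1..k}. A i \<inter> B j = {}"
    and disjA: "\<forall>i\<in>{1..k}. \<forall>j\<in>{1..k}. i \<noteq> j \<longrightarrow> A i \<inter> A j = {}"
    and disjB: "\<forall>i\<in>{1..k}. \<forall>j\<in>{1..k}. i \<noteq> j \<longrightarrow> B i \<inter> B j = {}"
    and pingpong: "\<forall>i\<in>{1..k}. f i ` (E - A i) \<subseteq> B i"
    and contr: "\<forall>i\<in>{1..k}. contraction_on (E - A i) (f i) \<and> contraction_on (E - B i) (finv i)"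
  shows "\<forall>eps>0. \<exists>l::nat. l \<ge> 1 \<and>
           (\<forall>w. length w = l \<longrightarrow> set w \<subseteq> {1..k} \<times> UNIV \<longrightarrow> reduced_word w \<longrightarrow>
              diameter (word_map f finv w ` (E - C'set A B (hd w))) < eps)"
proof (intro allI impI)
  fix eps :: real assume eps: "eps > 0"
  define L where "L = {1..k} \<times> (UNIV::bool set)"
  define G where "G = letter_map f finv"
  define C where "C = Cset A B"
  define C' where "C' = C'set A B"
  have finL: "finite L" unfolding L_def by simp
  have hom: "\<And>i. i \<in> {1..k} \<Longrightarrow> homeomorphism E E (f i) (finv i)" using homeo by blast
  have F1: "continuous_on E (G g) \<and> G g ` E \<subseteq> E" if "g \<in> L" for g
  proof -
    have h: "homeomorphism E E (f (fst g)) (finv (fst g))" using hom[of "fst g"] that L_def by auto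
    have "continuous_on E (f (fst g))" by (rule homeomorphism_cont1[OF h])
    moreover have "continuous_on E (finv (fst g))" by (rule homeomorphism_cont2[OF h])
    moreover have "f (fst g) ` E \<subseteq> E" by (simp add: homeomorphism_image1[OF h])
    moreover have "finv (fst g) ` E \<subseteq> E" by (simp add: homeomorphism_image2[OF h])
    ultimately show ?thesis unfolding G_def letter_map_def by simp
  qed
  have Finv: "finv i ` (E - B i) \<subseteq> A i" if i: "i \<in> {1..k}" for i
  proof
    fix z assume "z \<in> finv i ` (E - B i)"
    then obtain x where x: "x \<in> E" "x \<notin> B i" "z = finv i x" by auto
    have "finv i x \<in> finv i ` E" using x(1) by (rule imageI)
    then have "z \<in> E" using x(3) by (simp add: homeomorphism_image2[OF hom[OF i]])
    moreover have "f i z = x" using x by (simp add: homeomorphism_apply2[OF hom[OF i]])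
    ultimately show "z \<in> A i" using pingpong[rule_format, OF i] x(2) by blast
  qed
  have F2: "G g ` (E - C' g) \<subseteq> C g" if "g \<in> L" for g
  proof -
    obtain i b where g: "g = (i,b)" by (cases g)
    have i: "i \<in> {1..k}" using that g L_def by auto
    show ?thesis using pingpong[rule_format, OF i] Finv[OF i]
      unfolding g G_def C_def C'_def letter_map_def Cset_def C'set_def by (cases b) simp_all
  qed
  have F3: "contraction_on (E - C' g) (G g)" if "g \<in> L" for g
  proof -
    obtain i b where g: "g = (i,b)" by (cases g)
    have i: "i \<in> {1..k}" using that g L_def by auto
    show ?thesis using contr[rule_format, OF i]
      unfolding g G_def C'_def letter_map_def C'set_def by (cases b) simp_all
  qed
  have F4: "C h \<subseteq> E - C' g" if "h \<in> L" "g \<in> L" "g \<noteq> letter_inv h" for h g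
  proof -
    obtain i b where h: "h = (i,b)" by (cases h)
    obtain j c where g: "g = (j,c)" by (cases g)
    have ij: "i \<in> {1..k}" "j \<in> {1..k}" using that h g L_def by auto
    show ?thesis
      using that(3) cpt[rule_format, OF ij(1)] disjAB[rule_format, OF ij(1) ij(2)] disjAB[rule_format, OF ij(2) ij(1)]
        disjA[rule_format, OF ij(1) ij(2)] disjB[rule_format, OF ij(1) ij(2)]
      unfolding h g C_def C'_def Cset_def C'set_def letter_inv_def
      by (cases b; cases c) auto
  qed
  have F5: "compact (C h)" if "h \<in> L" for h
  proof -
    have i: "fst h \<in> {1..k}" using that L_def by auto
    have "compact (A (fst h))" "compact (B (fst h))" using cpt i by blast+
    then show ?thesis unfolding C_def Cset_def by simp
  qed
  define t where "t = eps / 2"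
  have t: "t > 0" using eps t_def by simp
  define S where "S = {p \<in> L \<times> L. snd p \<noteq> letter_inv (fst p)}"
  define P where "P = (\<lambda>p \<delta>. \<forall>x\<in>C (fst p). \<forall>y\<in>C (fst p). t \<le> dist x y \<longrightarrow>
                        dist (G (snd p) x) (G (snd p) y) \<le> dist x y - \<delta>)"
  have "\<exists>\<delta>>0. \<forall>s\<in>S. P s \<delta>"
  proof (rule finite_uniform)
    have "S \<subseteq> L \<times> L" unfolding S_def by blast
    then show "finite S" using finL by (meson finite_SigmaI finite_subset)
    show "\<forall>s\<in>S. \<exists>\<delta>>0. P s \<delta>"
    proof
      fix s assume s: "s \<in> S"
      then have hs: "fst s \<in> L" "snd s \<in> L" "snd s \<noteq> letter_inv (fst s)" unfolding S_def by auto
      have sub: "C (fst s) \<subseteq> E - C' (snd s)" using F4 hs by blast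
      have cont: "continuous_on (C (fst s)) (G (snd s))"
        using F1[OF hs(2)] sub by (meson Diff_subset continuous_on_subset order_trans)
      have cs: "\<forall>x\<in>E - C' (snd s). \<forall>y\<in>E - C' (snd s). x \<noteq> y \<longrightarrow> dist (G (snd s) x) (G (snd s) y) < dist x y"
        using F3[OF hs(2)] unfolding contraction_on_def by (rule conjunct2)
      have str: "\<forall>x\<in>C (fst s). \<forall>y\<in>C (fst s). x\<noteq>y \<longrightarrow> dist (G (snd s) x) (G (snd s) y) < dist x y"
      proof (intro ballI impI)
        fix x y assume "x \<in> C (fst s)" "y \<in> C (fst s)" "x \<noteq> y"
        then have "x \<in> E - C' (snd s)" "y \<in> E - C' (snd s)" using sub by auto
        then show "dist (G (snd s) x) (G (snd s) y) < dist x y" using cs \<open>x \<noteq> y\<close> by simp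
      qed
      show "\<exists>\<delta>>0. P s \<delta>" unfolding P_def
        by (rule contr_delta[OF F5[OF hs(1)] cont str t])
    qed
    show "P s \<delta>'" if "P s \<delta>" "0 < \<delta>'" "\<delta>' \<le> \<delta>" for s \<delta> \<delta>'
      unfolding P_def
    proof (intro ballI impI)
      fix x y assume xy: "x \<in> C (fst s)" "y \<in> C (fst s)" "t \<le> dist x y"
      have "dist (G (snd s) x) (G (snd s) y) \<le> dist x y - \<delta>"
        using that(1) xy unfolding P_def by simp
      then show "dist (G (snd s) x) (G (snd s) y) \<le> dist x y - \<delta>'" using that(3) by linarith
    qed
  qed
  then obtain \<delta> where \<delta>: "\<delta> > 0" "\<forall>s\<in>S. P s \<delta>" by blast
  have step: "dist (G g x) (G g y) \<le> dist x y - \<delta>"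
    if "h \<in> L" "g \<in> L" "g \<noteq> letter_inv h" "x \<in> C h" "y \<in> C h" "t \<le> dist x y" for h g x y
  proof -
    have "(h,g) \<in> S" using that S_def by auto
    then show ?thesis using \<delta>(2) that unfolding P_def by fastforce
  qed
  have iter: "\<forall>h x y. set (h#ws) \<subseteq> L \<longrightarrow> reduced_word (h#ws) \<longrightarrow> x \<in> C h \<longrightarrow> y \<in> C h \<longrightarrow>
      dist (word_map f finv ws x) (word_map f finv ws y) \<le> dist x y \<and>
      (t \<le> dist (word_map f finv ws x) (word_map f finv ws y) \<longrightarrow>
        dist (word_map f finv ws x) (word_map f finv ws y) \<le> dist x y - real (length ws) * \<delta>)" for ws
  proof (induction ws)
    case Nil
    then show ?case by simp
  next
    case (Cons g ws)
    show ?case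
    proof (intro allI impI)
      fix h x y assume hL: "set (h # g # ws) \<subseteq> L" and red: "reduced_word (h # g # ws)"
        and x: "x \<in> C h" and y: "y \<in> C h"
      have gi: "g \<noteq> letter_inv h" and red2: "reduced_word (g # ws)" using reduced_Cons2[OF red] by auto
      have hg: "h \<in> L" "g \<in> L" "set (g # ws) \<subseteq> L" using hL by auto
      have sub: "C h \<subseteq> E - C' g" using F4 hg gi by blast
      have xE: "x \<in> E - C' g" and yE: "y \<in> E - C' g" using sub x y by auto
      have x': "G g x \<in> C g" "G g y \<in> C g"
        by (rule subsetD[OF F2[OF hg(2)] imageI[OF xE]], rule subsetD[OF F2[OF hg(2)] imageI[OF yE]])
      have cc: "\<forall>x\<in>E - C' g. \<forall>y\<in>E - C' g. dist (G g x) (G g y) \<le> dist x y"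
        using F3[OF hg(2)] unfolding contraction_on_def by (rule conjunct1)
      have c: "dist (G g x) (G g y) \<le> dist x y" using cc xE yE by simp
      have IH: "dist (word_map f finv ws (G g x)) (word_map f finv ws (G g y)) \<le> dist (G g x) (G g y) \<and>
      (t \<le> dist (word_map f finv ws (G g x)) (word_map f finv ws (G g y)) \<longrightarrow>
        dist (word_map f finv ws (G g x)) (word_map f finv ws (G g y)) \<le> dist (G g x) (G g y) - real (length ws) * \<delta>)"
        by (rule Cons.IH[rule_format, OF hg(3) red2 x'])
      have eq: "word_map f finv (g # ws) z = word_map f finv ws (G g z)" for z
        by (simp add: G_def)
      show "dist (word_map f finv (g # ws) x) (word_map f finv (g # ws) y) \<le> dist x y \<and>
         (t \<le> dist (word_map f finv (g # ws) x) (word_map f finv (g # ws) y) \<longrightarrow>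
          dist (word_map f finv (g # ws) x) (word_map f finv (g # ws) y) \<le> dist x y - real (length (g # ws)) * \<delta>)"
      proof (unfold eq, intro conjI impI)
        show "dist (word_map f finv ws (G g x)) (word_map f finv ws (G g y)) \<le> dist x y"
          using IH c by linarith
        assume tt: "t \<le> dist (word_map f finv ws (G g x)) (word_map f finv ws (G g y))"
        then have "t \<le> dist x y" using IH c by linarith
        then have "dist (G g x) (G g y) \<le> dist x y - \<delta>" using step[OF hg(1,2) gi x y] by blast
        then show "dist (word_map f finv ws (G g x)) (word_map f finv ws (G g y)) \<le> dist x y - real (length (g # ws)) * \<delta>"
          using IH tt by (simp add: algebra_simps)
      qed
    qed
  qed
  have "bounded E" using \<open>compact E\<close> compact_imp_bounded by blast
  then obtain D where D: "\<forall>x\<in>E. \<forall>y\<in>E. dist x y \<le> D" using bounded_two_points by blast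
  obtain m where m: "D < real m * \<delta>" using ex_less_of_nat_mult[OF \<delta>(1)] by blast
  show "\<exists>l::nat. l \<ge> 1 \<and>
           (\<forall>w. length w = l \<longrightarrow> set w \<subseteq> {1..k} \<times> UNIV \<longrightarrow> reduced_word w \<longrightarrow>
              diameter (word_map f finv w ` (E - C'set A B (hd w))) < eps)"
  proof (intro exI[of _ "Suc m"] conjI allI impI, simp)
    fix w :: "letter list" assume len: "length w = Suc m" and wL: "set w \<subseteq> {1..k} \<times> UNIV" and red: "reduced_word w"
    obtain g1 ws where w: "w = g1 # ws" using len by (cases w) auto
    have lws: "length ws = m" using len w by simp
    have wL': "set (g1 # ws) \<subseteq> L" using wL w L_def by simp
    have g1: "g1 \<in> L" using wL' by simp
    let ?I = "word_map f finv w ` (E - C'set A B (hd w))"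
    have close: "dist u v < t" if uI: "u \<in> ?I" and vI: "v \<in> ?I" for u v
    proof -
      obtain x0 y0 where xy: "x0 \<in> E - C' g1" "y0 \<in> E - C' g1"
        "u = word_map f finv ws (G g1 x0)" "v = word_map f finv ws (G g1 y0)"
        using uI vI w by (auto simp: G_def C'_def)
      have xC: "G g1 x0 \<in> C g1" "G g1 y0 \<in> C g1" using F2[OF g1] xy by blast+
      have "C g1 \<subseteq> E" using cpt g1 unfolding C_def L_def Cset_def by (cases g1) auto
      then have "dist (G g1 x0) (G g1 y0) \<le> D" using D xC by blast
      moreover have "dist u v \<le> dist u v" by simp
      show ?thesis
      proof (rule ccontr)
        assume "\<not> dist u v < t"
        then have "dist u v \<le> dist (G g1 x0) (G g1 y0) - real m * \<delta>"
          using iter[of ws, rule_format, OF wL' _ xC] red xy(3,4) lws w by auto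
        then show False using \<open>dist (G g1 x0) (G g1 y0) \<le> D\<close> m t zero_le_dist[of u v] by linarith
      qed
    qed
    have bI: "bounded ?I" unfolding bounded_two_points using close less_imp_le by blast
    show "diameter ?I < eps"
    proof (rule ccontr)
      assume "\<not> diameter ?I < eps"
      then have "t < diameter ?I" using t_def eps by simp
      then obtain u v where "u \<in> ?I" "v \<in> ?I" "t < dist u v"
        using diameter_lower_bounded[OF bI t] by blast
      then show False using close by fastforce
    qed
  qed
qed

end
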